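(* Every graphing is a modeling. That is, let $V$ be a standard Borel space with a probability measure $\mu$ and let $T_1,\dots,T_k$ be measure-preserving Borel involutions of $V$; let $\mathbf G$ be the graph on $V$ in which distinct $x,y$ are adjacent iff $T_j(x)=y$ for some $1\le j\le k$. Then $\mathbf G$ (with the Borel $\sigma$-algebra of $V$) is a relational sample space, and hence $(\mathbf G,\mu)$ is a modeling.
   Context: A relational sample space is a graph (or relational structure) whose domain is a standard Borel space such that for every $p$ and every first-order formula $\phi$ with free variables among $x_1,\dots,x_p$, the set $\{(v_1,\dots,v_p)\in V^p:\mathbf G\models\phi(v_1,\dots,v_p)\}$ is measurable with respect to the product $\sigma$-algebra of $V^p$. A modeling is a relational sample space equipped with a probability measure. *)

theory Defs
  imports "HOL-Probability.Probability"
begin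

definition standard_borel :: "'a measure \<Rightarrow> bool" where
  "standard_borel M \<longleftrightarrow>
     (\<exists>X. topspace X = space M \<and> completely_metrizable_space X \<and> separable_space X \<and>
          sets M = sigma_sets (space M) {U. openin X U})"

datatype fo_formula =
    FEq nat nat
  | FAdj nat nat
  | FNot fo_formula
  | FAnd fo_formula fo_formula
  | FEx nat fo_formula

fun free_vars :: "fo_formula \<Rightarrow> nat set" where
  "free_vars (FEq i j) = {i, j}"
| "free_vars (FAdj i j) = {i, j}"
| "free_vars (FNot \<phi>) = free_vars \<phi>"
| "free_vars (FAnd \<phi> \<psi>) = free_vars \<phi> \<union> free_vars \<psi>"
| "free_vars (FEx i \<phi>) = free_vars \<phi> - {i}"

fun fo_sat :: "'a set \<Rightarrow> ('a \<Rightarrow> 'a \<Rightarrow> bool) \<Rightarrow> (nat \<Rightarrow> 'a) \<Rightarrow> fo_formula \<Rightarrow> bool" where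
  "fo_sat V E v (FEq i j) = (v i = v j)"
| "fo_sat V E v (FAdj i j) = E (v i) (v j)"
| "fo_sat V E v (FNot \<phi>) = (\<not> fo_sat V E v \<phi>)"
| "fo_sat V E v (FAnd \<phi> \<psi>) = (fo_sat V E v \<phi> \<and> fo_sat V E v \<psi>)"
| "fo_sat V E v (FEx i \<phi>) = (\<exists>a\<in>V. fo_sat V E (v(i := a)) \<phi>)"

definition relational_sample_space :: "'a measure \<Rightarrow> ('a \<Rightarrow> 'a \<Rightarrow> bool) \<Rightarrow> bool" where
  "relational_sample_space M E \<longleftrightarrow>
     standard_borel M \<and>
     (\<forall>p \<phi>. free_vars \<phi> \<subseteq> {..<p} \<longrightarrow>
        {v \<in> space (PiM {..<p} (\<lambda>_. M)). fo_sat (space M) E v \<phi>} \<in> sets (PiM {..<p} (\<lambda>_. M)))"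

definition modeling :: "'a measure \<Rightarrow> ('a \<Rightarrow> 'a \<Rightarrow> bool) \<Rightarrow> bool" where
  "modeling M E \<longleftrightarrow> relational_sample_space M E \<and> prob_space M"

end

theory Submission
  imports Defs
begin


lemma (in Metric_space) sep_family:
  assumes "countable C" "C \<subseteq> M" "mtopology closure_of C = M"
  shows "\<exists>B. countable B \<and> (\<forall>U\<in>B. openin mtopology U) \<and>
            (\<forall>x\<in>M. \<forall>y\<in>M. x \<noteq> y \<longrightarrow> (\<exists>U\<in>B. x\<in>U \<and> y\<notin>U))"
proof (intro exI conjI)
  let ?B = "(\<lambda>(q,r). mball q (of_rat r)) ` (C \<times> (UNIV::rat set))"
  show "countable ?B" using assms(1) by (intro countable_image countable_SIGMA) auto
  show "\<forall>U\<in>?B. openin mtopology U" by (auto simp: split_beta)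
  show "\<forall>x\<in>M. \<forall>y\<in>M. x \<noteq> y \<longrightarrow> (\<exists>U\<in>?B. x\<in>U \<and> y\<notin>U)"
  proof (intro ballI impI)
    fix x y assume xy: "x \<in> M" "y \<in> M" "x \<noteq> y"
    define d0 where "d0 = d x y"
    have d0: "d0 > 0" using xy by (simp add: d0_def)
    have xc: "x \<in> mtopology closure_of C" using assms(3) xy by (simp only:)
    have h: "\<And>r. r > 0 \<Longrightarrow> \<exists>y\<in>C. y \<in> mball x r"
      using xc unfolding metric_closure_of by blast
    have "\<exists>q\<in>C. q \<in> mball x (d0/3)" by (rule h) (use d0 in simp)
    then obtain q where q: "q \<in> C" "q \<in> mball x (d0/3)" by blast
    obtain r where r: "r \<in> \<rat>" "d0/3 < r" "r < 2*d0/3"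
      using Rats_dense_in_real[of "d0/3" "2*d0/3"] d0 by auto
    then obtain r' where r': "r = of_rat r'" by (auto elim: Rats_cases)
    have qM: "q \<in> M" using q assms(2) by auto
    have dqx: "d q x < d0/3" using q by (simp add: commute)
    have tri: "d x y \<le> d x q + d q y" by (rule triangle) (use xy qM in auto)
    have "d q y > 2*d0/3" using tri dqx by (simp add: commute d0_def)
    then have "y \<notin> mball q r" "x \<in> mball q r" using dqx r qM xy by auto
    moreover have "(q,r') \<in> C \<times> (UNIV::rat set)" using q(1) by simp
    then have "(\<lambda>(q,r). mball q (of_rat r)) (q,r') \<in> ?B" by (rule imageI)
    then have "mball q r \<in> ?B" using r' by simp
    ultimately show "\<exists>U\<in>?B. x\<in>U \<and> y\<notin>U" by blast
  qed
qed

lemma standard_borel_sep: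
  assumes "standard_borel M"
  shows "\<exists>B. countable B \<and> B \<subseteq> sets M \<and>
            (\<forall>x\<in>space M. \<forall>y\<in>space M. x \<noteq> y \<longrightarrow> (\<exists>U\<in>B. x\<in>U \<and> y\<notin>U))"
proof -
  obtain X where X: "topspace X = space M" "completely_metrizable_space X" "separable_space X"
    "sets M = sigma_sets (space M) {U. openin X U}"
    using assms unfolding standard_borel_def by blast
  obtain S d where Sd: "Metric_space S d" "X = Metric_space.mtopology S d"
    using X(2) unfolding completely_metrizable_space_def by blast
  obtain C where C: "countable C" "C \<subseteq> topspace X" "X closure_of C = topspace X"
    using X(3) unfolding separable_space_def by blast
  have tX: "topspace X = S" unfolding Sd(2) by (rule Metric_space.topspace_mtopology[OF Sd(1)])
  have SM: "S = space M" using X(1) tX by (simp only:)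
  have C'1: "C \<subseteq> S" using C(2) unfolding tX .
  have C'3: "X closure_of C = S" using C(3) unfolding tX .
  have C'2: "Metric_space.mtopology S d closure_of C = S" using C'3 unfolding Sd(2) .
  obtain B where B0: "countable B \<and> (\<forall>U\<in>B. openin (Metric_space.mtopology S d) U) \<and>
      (\<forall>x\<in>S. \<forall>y\<in>S. x \<noteq> y \<longrightarrow> (\<exists>U\<in>B. x\<in>U \<and> y\<notin>U))"
    using Metric_space.sep_family[OF Sd(1) C(1) C'1 C'2] ..
  note B = B0[THEN conjunct1] B0[THEN conjunct2, THEN conjunct1] B0[THEN conjunct2, THEN conjunct2]
  have "B \<subseteq> sets M"
  proof
    fix U assume "U \<in> B"
    then have "openin X U" using B(2) unfolding Sd(2) by blast
    then have "U \<in> sigma_sets (space M) {U. openin X U}" by (intro sigma_sets.Basic) simp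
    then show "U \<in> sets M" unfolding X(4) .
  qed
  then show ?thesis
  proof (intro exI[of _ B] conjI)
    show "countable B" by (rule B(1))
    show "\<forall>x\<in>space M. \<forall>y\<in>space M. x \<noteq> y \<longrightarrow> (\<exists>U\<in>B. x\<in>U \<and> y\<notin>U)"
      using B(3) unfolding SM .
  qed
qed


lemma eq_sets_sep:
  assumes B: "countable B" "B \<subseteq> sets M" "\<forall>x\<in>space M. \<forall>y\<in>space M. x \<noteq> y \<longrightarrow> (\<exists>U\<in>B. x\<in>U \<and> y\<notin>U)"
    and f: "f \<in> N \<rightarrow>\<^sub>M M" and g: "g \<in> N \<rightarrow>\<^sub>M M"
  shows "{z\<in>space N. f z = g z} \<in> sets N"
proof -
  have "{z\<in>space N. f z = g z} = space N - (\<Union>U\<in>B. (f -` U \<inter> space N) - (g -` U \<inter> space N))"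
  proof (rule set_eqI, rule iffI)
    fix z assume "z \<in> {z\<in>space N. f z = g z}"
    then show "z \<in> space N - (\<Union>U\<in>B. (f -` U \<inter> space N) - (g -` U \<inter> space N))" by auto
  next
    fix z assume z: "z \<in> space N - (\<Union>U\<in>B. (f -` U \<inter> space N) - (g -` U \<inter> space N))"
    have "f z \<in> space M" "g z \<in> space M" using f g z by (auto simp: measurable_space)
    then have "f z = g z" using B(3) z by blast
    then show "z \<in> {z\<in>space N. f z = g z}" using z by auto
  qed
  also have "\<dots> \<in> sets N"
  proof (intro sets.Diff sets.top sets.countable_UN')
    show "countable B" by fact
    show "(\<lambda>U. f -` U \<inter> space N - g -` U \<inter> space N) ` B \<subseteq> sets N"
      using B(2) f g by (auto intro!: sets.Diff measurable_sets)
  qed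
  finally show ?thesis .
qed



lemma card_image_kernel:
  assumes "\<And>p q. p \<in> Q \<Longrightarrow> q \<in> Q \<Longrightarrow> f p = f q \<longleftrightarrow> g p = g q"
  shows "card (f ` Q) = card (g ` Q)"
proof -
  define h where "h y = g (inv_into Q f y)" for y
  have "bij_betw h (f ` Q) (g ` Q)"
  proof (rule bij_betw_imageI)
    show "inj_on h (f ` Q)"
    proof (rule inj_onI)
      fix y1 y2 assume y: "y1 \<in> f ` Q" "y2 \<in> f ` Q" "h y1 = h y2"
      have i: "inv_into Q f y1 \<in> Q" "inv_into Q f y2 \<in> Q" using y by (auto intro: inv_into_into)
      have "f (inv_into Q f y1) = f (inv_into Q f y2)"
        using assms[OF i] y(3) unfolding h_def by simp
      then show "y1 = y2" using y by (simp add: f_inv_into_f)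
    qed
    show "h ` f ` Q = g ` Q"
    proof
      show "h ` f ` Q \<subseteq> g ` Q" unfolding h_def by (auto intro: inv_into_into)
      show "g ` Q \<subseteq> h ` f ` Q"
      proof
        fix z assume "z \<in> g ` Q"
        then obtain p where p: "p \<in> Q" "z = g p" by blast
        have i: "inv_into Q f (f p) \<in> Q" using p by (auto intro: inv_into_into)
        have "f (inv_into Q f (f p)) = f p" using p by (simp add: f_inv_into_f)
        then have "h (f p) = g p" using assms[OF i p(1)] unfolding h_def by simp
        then show "z \<in> h ` f ` Q" using p by force
      qed
    qed
  qed
  then show ?thesis by (rule bij_betw_same_card)
qed

locale graphing =
  fixes M :: "'a measure" and k :: nat and T :: "nat \<Rightarrow> 'a \<Rightarrow> 'a"
  assumes Tmeas: "\<And>j. j \<in> {1..k} \<Longrightarrow> T j \<in> M \<rightarrow>\<^sub>M M"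
    and Tinv: "\<And>j x. j \<in> {1..k} \<Longrightarrow> x \<in> space M \<Longrightarrow> T j (T j x) = x"
begin

definition W :: "nat \<Rightarrow> nat list set" where
  "W n = {w. set w \<subseteq> {1..k} \<and> length w \<le> n}"

definition app :: "nat list \<Rightarrow> 'a \<Rightarrow> 'a" where
  "app w x = foldr T w x"

definition eqv :: "nat \<Rightarrow> nat set \<Rightarrow> (nat \<Rightarrow> 'a) \<Rightarrow> (nat \<Rightarrow> 'a) \<Rightarrow> bool" where
  "eqv n S v v' \<longleftrightarrow> (\<forall>i\<in>S. \<forall>i'\<in>S. \<forall>w\<in>W n. \<forall>w'\<in>W n.
      (app w (v i) = app w' (v i')) \<longleftrightarrow> (app w (v' i) = app w' (v' i')))"

lemma finite_W: "finite (W n)"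
  unfolding W_def by (rule finite_lists_length_le) simp

lemma W_mono: "w \<in> W m \<Longrightarrow> m \<le> n \<Longrightarrow> w \<in> W n"
  unfolding W_def by auto

lemma W_append: "u \<in> W m \<Longrightarrow> w \<in> W n \<Longrightarrow> u @ w \<in> W (m + n)"
  unfolding W_def by auto

lemma W_rev: "u \<in> W m \<Longrightarrow> rev u \<in> W m"
  unfolding W_def by auto

lemma app_Nil[simp]: "app [] x = x" unfolding app_def by simp
lemma app_Cons[simp]: "app (j # w) x = T j (app w x)" unfolding app_def by simp

lemma app_append: "app (u @ w) x = app u (app w x)"
  unfolding app_def by simp

lemma app_meas: "set w \<subseteq> {1..k} \<Longrightarrow> (\<lambda>x. app w x) \<in> M \<rightarrow>\<^sub>M M"
proof (induction w)
  case Nil then show ?case by simp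
next
  case (Cons j w)
  then have "T j \<in> M \<rightarrow>\<^sub>M M" "(\<lambda>x. app w x) \<in> M \<rightarrow>\<^sub>M M" using Tmeas by auto
  then have "(\<lambda>x. T j (app w x)) \<in> M \<rightarrow>\<^sub>M M" by (intro measurable_compose[OF _ \<open>T j \<in> M \<rightarrow>\<^sub>M M\<close>])
  then show ?case by simp
qed

lemma app_closed: "set w \<subseteq> {1..k} \<Longrightarrow> x \<in> space M \<Longrightarrow> app w x \<in> space M"
  by (rule measurable_space[OF app_meas])

lemma app_rev: "set u \<subseteq> {1..k} \<Longrightarrow> x \<in> space M \<Longrightarrow> app (rev u) (app u x) = x"
proof (induction u)
  case Nil then show ?case by simp
next
  case (Cons j u)
  have "app (rev (j # u)) (app (j # u) x) = app (rev u) (T j (T j (app u x)))"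
    by (simp add: app_append)
  also have "T j (T j (app u x)) = app u x" using Cons.prems by (intro Tinv app_closed) auto
  finally show ?case using Cons by simp
qed

lemma eqv_mono: "eqv n S v v' \<Longrightarrow> m \<le> n \<Longrightarrow> S' \<subseteq> S \<Longrightarrow> eqv m S' v v'"
  unfolding eqv_def by (meson W_mono subsetD)

lemma eqv_sym: "eqv n S v v' \<Longrightarrow> eqv n S v' v"
  unfolding eqv_def by blast

lemma eqvD: "eqv n S v v' \<Longrightarrow> i \<in> S \<Longrightarrow> i' \<in> S \<Longrightarrow> w \<in> W n \<Longrightarrow> w' \<in> W n \<Longrightarrow>
    (app w (v i) = app w' (v i')) \<longleftrightarrow> (app w (v' i) = app w' (v' i'))"
  unfolding eqv_def by blast

end


context graphing begin

definition near :: "nat \<Rightarrow> nat set \<Rightarrow> (nat \<Rightarrow> 'a) \<Rightarrow> 'a \<Rightarrow> bool" where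
  "near D F v a \<longleftrightarrow> (\<exists>i\<in>F. \<exists>w\<in>W D. a = app w (v i))"

definition tp :: "nat \<Rightarrow> 'a \<Rightarrow> (nat list \<times> nat list \<Rightarrow> bool)" where
  "tp R b = restrict (\<lambda>(u,u'). app u b = app u' b) (W R \<times> W R)"

lemma W_set: "w \<in> W n \<Longrightarrow> set w \<subseteq> {1..k}"
  unfolding W_def by simp

lemma ex_step:
  assumes fin: "finite F" and eq: "eqv (3*R) F v v'" and xF: "x \<notin> F"
    and vV: "\<forall>i\<in>F. v i \<in> space M" and v'V: "\<forall>i\<in>F. v' i \<in> space M" and aV: "a \<in> space M"
  shows "\<exists>b\<in>space M. eqv R (insert x F) (v(x:=a)) (v'(x:=b))"
proof (cases "near (2*R) F v a")
  case True
  then obtain i w where iw: "i \<in> F" "w \<in> W (2*R)" "a = app w (v i)"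
    unfolding near_def by blast
  define b where "b = app w (v' i)"
  have bV: "b \<in> space M" unfolding b_def using iw v'V by (intro app_closed W_set) auto
  have uw: "u @ w \<in> W (3*R)" if "u \<in> W R" for u
    using W_append[OF that iw(2)] by (rule W_mono) simp
  have uR: "u \<in> W (3*R)" if "u \<in> W R" for u using that by (rule W_mono) simp
  have "eqv R (insert x F) (v(x:=a)) (v'(x:=b))"
    unfolding eqv_def
  proof (intro ballI)
    fix y y' u u' assume y: "y \<in> insert x F" "y' \<in> insert x F" and u: "u \<in> W R" "u' \<in> W R"
    show "(app u ((v(x:=a)) y) = app u' ((v(x:=a)) y')) \<longleftrightarrow> (app u ((v'(x:=b)) y) = app u' ((v'(x:=b)) y'))"
    proof (cases "y = x")
      case True
      note yx = True
      show ?thesis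
      proof (cases "y' = x")
        case True
        show ?thesis using yx True eqvD[OF eq iw(1) iw(1) uw[OF u(1)] uw[OF u(2)]]
          by (simp add: iw(3) b_def app_append)
      next
        case False
        then have "y' \<in> F" using y by simp
        show ?thesis using yx False eqvD[OF eq iw(1) \<open>y' \<in> F\<close> uw[OF u(1)] uR[OF u(2)]]
          by (simp add: iw(3) b_def app_append)
      qed
    next
      case False
      then have "y \<in> F" using y by simp
      show ?thesis
      proof (cases "y' = x")
        case True
        show ?thesis using False True eqvD[OF eq \<open>y \<in> F\<close> iw(1) uR[OF u(1)] uw[OF u(2)]]
          by (simp add: iw(3) b_def app_append)
      next
        case False2: False
        then have "y' \<in> F" using y by simp
        show ?thesis using False False2 eqvD[OF eq \<open>y \<in> F\<close> \<open>y' \<in> F\<close> uR[OF u(1)] uR[OF u(2)]]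
          by simp
      qed
    qed
  qed
  then show ?thesis using bV by blast
next
  case False
  note far = False
  define Real where "Real = {b\<in>space M. tp R b = tp R a}"
  have ex: "\<exists>b\<in>Real. \<not> near (2*R) F v' b"
  proof (rule ccontr)
    assume "\<not> (\<exists>b\<in>Real. \<not> near (2*R) F v' b)"
    then have allnear: "\<And>b. b \<in> Real \<Longrightarrow> near (2*R) F v' b" by blast
    define P where "P = F \<times> W (2*R)"
    define f where "f = (\<lambda>(i,w). app w (v i))"
    define g where "g = (\<lambda>(i,w). app w (v' i))"
    define Q where "Q = {p\<in>P. tp R (f p) = tp R a}"
    have finP: "finite P" unfolding P_def using fin finite_W by simp
    have uw: "u @ w \<in> W (3*R)" if "u \<in> W R" "w \<in> W (2*R)" for u w
      using W_append[OF that] by (rule W_mono) simp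
    have tpfg: "tp R (f p) = tp R (g p)" if "p \<in> P" for p
    proof -
      obtain i w where p: "p = (i,w)" "i \<in> F" "w \<in> W (2*R)" using \<open>p \<in> P\<close> unfolding P_def by blast
      show ?thesis unfolding tp_def
      proof (rule restrict_ext)
        fix uu assume "uu \<in> W R \<times> W R"
        then obtain u u' where uu: "uu = (u,u')" "u \<in> W R" "u' \<in> W R" by blast
        show "(case uu of (u, u') \<Rightarrow> app u (f p) = app u' (f p)) = (case uu of (u, u') \<Rightarrow> app u (g p) = app u' (g p))"
          using eqvD[OF eq p(2) p(2) uw[OF uu(2) p(3)] uw[OF uu(3) p(3)]]
          by (simp add: uu(1) p(1) f_def g_def app_append)
      qed
    qed
    have QQ: "Q = {p\<in>P. tp R (g p) = tp R a}" unfolding Q_def using tpfg by auto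
    have ker: "f p = f q \<longleftrightarrow> g p = g q" if "p \<in> Q" "q \<in> Q" for p q
    proof -
      obtain i w where p: "p = (i,w)" "i \<in> F" "w \<in> W (2*R)" using \<open>p \<in> Q\<close> unfolding Q_def P_def by blast
      obtain i' w' where q: "q = (i',w')" "i' \<in> F" "w' \<in> W (2*R)" using \<open>q \<in> Q\<close> unfolding Q_def P_def by blast
      have "w \<in> W (3*R)" "w' \<in> W (3*R)" using p(3) q(3) by (auto intro: W_mono)
      then show ?thesis using eqvD[OF eq p(2) q(2)] by (simp add: p(1) q(1) f_def g_def)
    qed
    have cardeq: "card (f ` Q) = card (g ` Q)" by (rule card_image_kernel) (rule ker)
    have gQ: "g ` Q = Real"
    proof
      show "g ` Q \<subseteq> Real"
      proof
        fix b assume "b \<in> g ` Q"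
        then obtain i w where iw: "(i,w) \<in> Q" "b = g (i,w)" by auto
        then have "i \<in> F" "w \<in> W (2*R)" "tp R (g (i,w)) = tp R a" using QQ unfolding P_def by auto
        moreover have "b \<in> space M" using iw(2) \<open>i \<in> F\<close> \<open>w \<in> W (2*R)\<close> v'V unfolding g_def
          by (auto intro!: app_closed W_set)
        ultimately show "b \<in> Real" unfolding Real_def using iw(2) by simp
      qed
      show "Real \<subseteq> g ` Q"
      proof
        fix b assume b: "b \<in> Real"
        then obtain i w where iw: "i \<in> F" "w \<in> W (2*R)" "b = app w (v' i)"
          using allnear[OF b] unfolding near_def by blast
        have "(i,w) \<in> Q" using QQ b iw unfolding P_def Real_def g_def by auto
        moreover have "b = g (i,w)" using iw unfolding g_def by simp
        ultimately show "b \<in> g ` Q" by blast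
      qed
    qed
    have fQ: "f ` Q \<subseteq> Real"
    proof
      fix b assume "b \<in> f ` Q"
      then obtain i w where iw: "(i,w) \<in> Q" "b = f (i,w)" by auto
      then have "i \<in> F" "w \<in> W (2*R)" "tp R (f (i,w)) = tp R a" unfolding Q_def P_def by auto
      moreover have "b \<in> space M" using iw(2) \<open>i \<in> F\<close> \<open>w \<in> W (2*R)\<close> vV unfolding f_def
        by (auto intro!: app_closed W_set)
      ultimately show "b \<in> Real" unfolding Real_def using iw(2) by simp
    qed
    have aR: "a \<in> Real" unfolding Real_def using aV by simp
    have anf: "a \<notin> f ` Q"
    proof
      assume "a \<in> f ` Q"
      then obtain i w where iw: "(i,w) \<in> Q" "a = f (i,w)" by auto
      then have "near (2*R) F v a" unfolding near_def Q_def P_def f_def by auto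
      then show False using far by simp
    qed
    have "finite Q" unfolding Q_def using finP by simp
    then have "finite (g ` Q)" by (rule finite_imageI)
    then have finR: "finite Real" unfolding gQ .
    have "f ` Q \<subset> Real" using fQ aR anf by blast
    then have "card (f ` Q) < card Real" using finR by (rule psubset_card_mono[rotated])
    then show False using cardeq gQ by simp
  qed
  then obtain b where b: "b \<in> Real" "\<not> near (2*R) F v' b" by blast
  have bV: "b \<in> space M" and tpb: "tp R b = tp R a" using b(1) unfolding Real_def by auto
  have uR: "u \<in> W (3*R)" if "u \<in> W R" for u using that by (rule W_mono) simp
  have tpD: "(app u a = app u' a) \<longleftrightarrow> (app u b = app u' b)" if "u \<in> W R" "u' \<in> W R" for u u'
  proof -
    have "tp R a (u,u') = tp R b (u,u')" using tpb by simp
    then show ?thesis using that unfolding tp_def by simp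
  qed
  have nofar: "app u c \<noteq> app u' (z i)" if "u \<in> W R" "u' \<in> W R" "i \<in> F" "c \<in> space M"
     "\<not> near (2*R) F z c" for u u' i c z
  proof
    assume h: "app u c = app u' (z i)"
    have "c = app (rev u) (app u c)" using app_rev[OF W_set[OF that(1)] that(4)] by simp
    also have "\<dots> = app (rev u @ u') (z i)" using h by (simp add: app_append)
    finally have "near (2*R) F z c" unfolding near_def using that(3)
      W_append[OF W_rev[OF that(1)] that(2)] by (metis mult_2)
    then show False using that(5) by simp
  qed
  have "eqv R (insert x F) (v(x:=a)) (v'(x:=b))"
    unfolding eqv_def
  proof (intro ballI)
    fix y y' u u' assume y: "y \<in> insert x F" "y' \<in> insert x F" and u: "u \<in> W R" "u' \<in> W R"
    show "(app u ((v(x:=a)) y) = app u' ((v(x:=a)) y')) \<longleftrightarrow> (app u ((v'(x:=b)) y) = app u' ((v'(x:=b)) y'))"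
    proof (cases "y = x")
      case True
      note yx = True
      show ?thesis
      proof (cases "y' = x")
        case True
        show ?thesis using yx True tpD[OF u] by simp
      next
        case False
        then have "y' \<in> F" using y by simp
        show ?thesis using yx False nofar[OF u \<open>y' \<in> F\<close> aV far] nofar[OF u \<open>y' \<in> F\<close> bV b(2)]
          by simp
      qed
    next
      case False
      then have "y \<in> F" using y by simp
      show ?thesis
      proof (cases "y' = x")
        case True
        show ?thesis using False True nofar[OF u(2) u(1) \<open>y \<in> F\<close> aV far]
          nofar[OF u(2) u(1) \<open>y \<in> F\<close> bV b(2)] by auto
      next
        case False2: False
        then have "y' \<in> F" using y by simp
        show ?thesis using False False2 eqvD[OF eq \<open>y \<in> F\<close> \<open>y' \<in> F\<close> uR[OF u(1)] uR[OF u(2)]]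
          by simp
      qed
    qed
  qed
  then show ?thesis using bV by blast
qed

end


lemma finite_free_vars: "finite (free_vars \<phi>)"
  by (induction \<phi>) auto

context graphing begin

abbreviation Eg :: "'a \<Rightarrow> 'a \<Rightarrow> bool" where
  "Eg \<equiv> (\<lambda>x y. x \<noteq> y \<and> (\<exists>j\<in>{1..k}. T j x = y))"

lemma local_prop:
  "\<exists>R. \<forall>v v'. (\<forall>i\<in>free_vars \<phi>. v i \<in> space M \<and> v' i \<in> space M) \<longrightarrow>
      eqv R (free_vars \<phi>) v v' \<longrightarrow> (fo_sat (space M) Eg v \<phi> \<longleftrightarrow> fo_sat (space M) Eg v' \<phi>)"
proof (induction \<phi>)
  case (FEq i j)
  have n: "[] \<in> W 0" unfolding W_def by simp
  show ?case
  proof (intro exI[of _ 0] allI impI)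
    fix v v' assume "\<forall>i'\<in>free_vars (FEq i j). v i' \<in> space M \<and> v' i' \<in> space M"
      and e: "eqv 0 (free_vars (FEq i j)) v v'"
    have ij: "i \<in> free_vars (FEq i j)" "j \<in> free_vars (FEq i j)" by auto
    show "fo_sat (space M) Eg v (FEq i j) \<longleftrightarrow> fo_sat (space M) Eg v' (FEq i j)"
      using eqvD[OF e ij n n] by simp
  qed
next
  case (FAdj i j)
  have n: "[] \<in> W 1" unfolding W_def by simp
  have s: "[j'] \<in> W 1" if "j' \<in> {1..k}" for j' unfolding W_def using that by simp
  show ?case
  proof (intro exI[of _ 1] allI impI)
    fix v v' assume "\<forall>i'\<in>free_vars (FAdj i j). v i' \<in> space M \<and> v' i' \<in> space M"
      and e: "eqv 1 (free_vars (FAdj i j)) v v'"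
    have ij: "i \<in> free_vars (FAdj i j)" "j \<in> free_vars (FAdj i j)" by auto
    have 1: "(v i = v j) \<longleftrightarrow> (v' i = v' j)" using eqvD[OF e ij n n] by simp
    have 2: "(T j' (v i) = v j) \<longleftrightarrow> (T j' (v' i) = v' j)" if "j' \<in> {1..k}" for j'
      using eqvD[OF e ij s[OF that] n] by simp
    show "fo_sat (space M) Eg v (FAdj i j) \<longleftrightarrow> fo_sat (space M) Eg v' (FAdj i j)"
      using 1 2 by auto
  qed
next
  case (FNot \<phi>)
  then show ?case by simp
next
  case (FAnd \<phi> \<psi>)
  from FAnd.IH(1) obtain R1 where R1: "\<forall>v v'. (\<forall>i\<in>free_vars \<phi>. v i \<in> space M \<and> v' i \<in> space M) \<longrightarrow>
      eqv R1 (free_vars \<phi>) v v' \<longrightarrow> (fo_sat (space M) Eg v \<phi> \<longleftrightarrow> fo_sat (space M) Eg v' \<phi>)" by blast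
  from FAnd.IH(2) obtain R2 where R2: "\<forall>v v'. (\<forall>i\<in>free_vars \<psi>. v i \<in> space M \<and> v' i \<in> space M) \<longrightarrow>
      eqv R2 (free_vars \<psi>) v v' \<longrightarrow> (fo_sat (space M) Eg v \<psi> \<longleftrightarrow> fo_sat (space M) Eg v' \<psi>)" by blast
  show ?case
  proof (intro exI[of _ "max R1 R2"] allI impI)
    fix v v' assume vals: "\<forall>i\<in>free_vars (FAnd \<phi> \<psi>). v i \<in> space M \<and> v' i \<in> space M"
      and e: "eqv (max R1 R2) (free_vars (FAnd \<phi> \<psi>)) v v'"
    have e1: "eqv R1 (free_vars \<phi>) v v'" by (rule eqv_mono[OF e]) auto
    have e2: "eqv R2 (free_vars \<psi>) v v'" by (rule eqv_mono[OF e]) auto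
    have "fo_sat (space M) Eg v \<phi> \<longleftrightarrow> fo_sat (space M) Eg v' \<phi>" using R1 vals e1 by simp
    moreover have "fo_sat (space M) Eg v \<psi> \<longleftrightarrow> fo_sat (space M) Eg v' \<psi>" using R2 vals e2 by simp
    ultimately show "fo_sat (space M) Eg v (FAnd \<phi> \<psi>) \<longleftrightarrow> fo_sat (space M) Eg v' (FAnd \<phi> \<psi>)" by simp
  qed
next
  case (FEx x \<psi>)
  from FEx.IH obtain R where R: "\<forall>v v'. (\<forall>i\<in>free_vars \<psi>. v i \<in> space M \<and> v' i \<in> space M) \<longrightarrow>
      eqv R (free_vars \<psi>) v v' \<longrightarrow> (fo_sat (space M) Eg v \<psi> \<longleftrightarrow> fo_sat (space M) Eg v' \<psi>)" by blast
  define F where "F = free_vars \<psi> - {x}"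
  have fF: "free_vars (FEx x \<psi>) = F" unfolding F_def by simp
  have finF: "finite F" unfolding F_def using finite_free_vars by simp
  have xF: "x \<notin> F" unfolding F_def by simp
  have dir: "fo_sat (space M) Eg v' (FEx x \<psi>)"
    if vals: "\<forall>i\<in>F. v i \<in> space M" "\<forall>i\<in>F. v' i \<in> space M" and e: "eqv (3*R) F v v'"
      and s: "fo_sat (space M) Eg v (FEx x \<psi>)" for v v'
  proof -
    obtain a where a: "a \<in> space M" "fo_sat (space M) Eg (v(x:=a)) \<psi>" using s by auto
    obtain b where b: "b \<in> space M" "eqv R (insert x F) (v(x:=a)) (v'(x:=b))"
      using ex_step[OF finF e xF vals a(1)] by blast
    have e': "eqv R (free_vars \<psi>) (v(x:=a)) (v'(x:=b))"
      by (rule eqv_mono[OF b(2)]) (auto simp: F_def)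
    have vals': "\<forall>i\<in>free_vars \<psi>. (v(x:=a)) i \<in> space M \<and> (v'(x:=b)) i \<in> space M"
      using vals a(1) b(1) unfolding F_def by auto
    have "fo_sat (space M) Eg (v'(x:=b)) \<psi>" using R vals' e' a(2) by blast
    then show ?thesis using b(1) by auto
  qed
  show ?case
  proof (intro exI[of _ "3*R"] allI impI)
    fix v v' assume vals: "\<forall>i\<in>free_vars (FEx x \<psi>). v i \<in> space M \<and> v' i \<in> space M"
      and e: "eqv (3*R) (free_vars (FEx x \<psi>)) v v'"
    have v1: "\<forall>i\<in>F. v i \<in> space M" "\<forall>i\<in>F. v' i \<in> space M" using vals fF by auto
    have e1: "eqv (3*R) F v v'" using e fF by simp
    show "fo_sat (space M) Eg v (FEx x \<psi>) \<longleftrightarrow> fo_sat (space M) Eg v' (FEx x \<psi>)"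
      using dir[OF v1 e1] dir[OF v1(2) v1(1) eqv_sym[OF e1]] by blast
  qed
qed

end
context graphing begin

lemma pred_eq_bool:
  assumes "{v\<in>space N. P v} \<in> sets N"
  shows "{v\<in>space N. P v = c} \<in> sets N"
proof (cases c)
  case True then show ?thesis using assms by simp
next
  case False
  have "{v\<in>space N. P v = c} = space N - {v\<in>space N. P v}" using False by auto
  then show ?thesis using assms by simp
qed

lemma definable_sets:
  assumes B: "countable B" "B \<subseteq> sets M" "\<forall>x\<in>space M. \<forall>y\<in>space M. x \<noteq> y \<longrightarrow> (\<exists>U\<in>B. x\<in>U \<and> y\<notin>U)"
    and fv: "free_vars \<phi> \<subseteq> {..<p}"
  shows "{v \<in> space (PiM {..<p} (\<lambda>_. M)). fo_sat (space M) Eg v \<phi>} \<in> sets (PiM {..<p} (\<lambda>_. M))"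
proof -
  define N where "N = PiM {..<p} (\<lambda>_. M)"
  obtain R where R: "\<forall>v v'. (\<forall>i\<in>free_vars \<phi>. v i \<in> space M \<and> v' i \<in> space M) \<longrightarrow>
      eqv R (free_vars \<phi>) v v' \<longrightarrow> (fo_sat (space M) Eg v \<phi> \<longleftrightarrow> fo_sat (space M) Eg v' \<phi>)"
    using local_prop by blast
  define I where "I = {..<p} \<times> {..<p} \<times> W R \<times> W R"
  define h where "h v = (\<lambda>(i,i',w,w'). app w (v i) = app w' (v i'))" for v :: "nat \<Rightarrow> 'a"
  define pat where "pat v = restrict (h v) I" for v
  define A where "A = {v\<in>space N. fo_sat (space M) Eg v \<phi>}"
  have finI: "finite I" unfolding I_def using finite_W by simp
  have vals: "v i \<in> space M" if "v \<in> space N" "i < p" for v i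
    using that unfolding N_def space_PiM by (auto simp: PiE_iff)
  have "pat ` A \<subseteq> PiE I (\<lambda>_. UNIV)" unfolding pat_def by auto
  moreover have "finite (PiE I (\<lambda>_. UNIV :: bool set))" using finI by (intro finite_PiE) auto
  ultimately have finpat: "finite (pat ` A)" by (rule finite_subset)
  have classes: "{v\<in>space N. pat v = pat u} \<in> sets N" for u
  proof -
    have eq: "{v\<in>space N. pat v = pat u} = {v\<in>space N. \<forall>t\<in>I. h v t = h u t}"
      unfolding pat_def by (auto simp: fun_eq_iff restrict_def)
    have X: "{v\<in>space N. h v t = h u t} \<in> sets N" if "t \<in> I" for t
    proof -
      obtain i i' w w' where t: "t = (i,i',w,w')" "i < p" "i' < p" "w \<in> W R" "w' \<in> W R"
        using \<open>t \<in> I\<close> unfolding I_def by auto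
      have "(\<lambda>v. v i) \<in> N \<rightarrow>\<^sub>M M"
        unfolding N_def by (rule measurable_component_singleton) (use t in simp)
      from measurable_compose[OF this app_meas[OF W_set[OF t(4)]]]
      have m1: "(\<lambda>v. app w (v i)) \<in> N \<rightarrow>\<^sub>M M" .
      have "(\<lambda>v. v i') \<in> N \<rightarrow>\<^sub>M M"
        unfolding N_def by (rule measurable_component_singleton) (use t in simp)
      from measurable_compose[OF this app_meas[OF W_set[OF t(5)]]]
      have m2: "(\<lambda>v. app w' (v i')) \<in> N \<rightarrow>\<^sub>M M" .
      have "{v\<in>space N. app w (v i) = app w' (v i')} \<in> sets N"
        by (rule eq_sets_sep[OF B m1 m2])
      then have "{v\<in>space N. (app w (v i) = app w' (v i')) = h u t} \<in> sets N"
        by (rule pred_eq_bool)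
      then show ?thesis unfolding h_def t(1) by simp
    qed
    have "{v\<in>space N. \<forall>t\<in>I. h v t = h u t} \<in> sets N"
      by (rule sets.sets_Collect_finite_All[OF X finI])
    then show ?thesis unfolding eq .
  qed
  have "A = \<Union> ((\<lambda>b. {v\<in>space N. pat v = b}) ` (pat ` A))"
  proof
    show "A \<subseteq> \<Union> ((\<lambda>b. {v\<in>space N. pat v = b}) ` (pat ` A))"
      unfolding A_def by blast
    show "\<Union> ((\<lambda>b. {v\<in>space N. pat v = b}) ` (pat ` A)) \<subseteq> A"
    proof
      fix v assume "v \<in> \<Union> ((\<lambda>b. {v\<in>space N. pat v = b}) ` (pat ` A))"
      then obtain u where u: "u \<in> A" "v \<in> space N" "pat v = pat u" by blast
      have uN: "u \<in> space N" using u(1) unfolding A_def by simp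
      have e: "eqv R {..<p} u v"
        unfolding eqv_def
      proof (intro ballI)
        fix i i' w w' assume "i \<in> {..<p}" "i' \<in> {..<p}" "w \<in> W R" "w' \<in> W R"
        then have "(i,i',w,w') \<in> I" unfolding I_def by simp
        then have "pat u (i,i',w,w') = pat v (i,i',w,w')" using u(3) by simp
        then show "(app w (u i) = app w' (u i')) \<longleftrightarrow> (app w (v i) = app w' (v i'))"
          using \<open>(i,i',w,w') \<in> I\<close> unfolding pat_def h_def by simp
      qed
      have e': "eqv R (free_vars \<phi>) u v" by (rule eqv_mono[OF e _ fv]) simp
      have vv: "\<forall>i\<in>free_vars \<phi>. u i \<in> space M \<and> v i \<in> space M"
        using fv vals[OF uN] vals[OF u(2)] by auto
      have "fo_sat (space M) Eg u \<phi>" using u(1) unfolding A_def by simp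
      then have "fo_sat (space M) Eg v \<phi>" using R vv e' by blast
      then show "v \<in> A" unfolding A_def using u(2) by simp
    qed
  qed
  also have "\<dots> \<in> sets N"
    using finpat classes by (intro sets.finite_Union) auto
  finally show ?thesis unfolding A_def N_def .
qed

end

theorem lemma8p38:
  fixes \<mu> :: "'a measure" and k :: nat and T :: "nat \<Rightarrow> 'a \<Rightarrow> 'a"
  assumes "standard_borel \<mu>"
    and "prob_space \<mu>"
    and "\<And>j. j \<in> {1..k} \<Longrightarrow> T j \<in> \<mu> \<rightarrow>\<^sub>M \<mu>"
    and "\<And>j. j \<in> {1..k} \<Longrightarrow> distr \<mu> \<mu> (T j) = \<mu>"
    and "\<And>j x. j \<in> {1..k} \<Longrightarrow> x \<in> space \<mu> \<Longrightarrow> T j (T j x) = x"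
  shows "relational_sample_space \<mu> (\<lambda>x y. x \<noteq> y \<and> (\<exists>j\<in>{1..k}. T j x = y))
       \<and> modeling \<mu> (\<lambda>x y. x \<noteq> y \<and> (\<exists>j\<in>{1..k}. T j x = y))"
proof -
  interpret graphing \<mu> k T
    by (unfold_locales) (use assms(3,5) in auto)
  obtain B where B0: "countable B \<and> B \<subseteq> sets \<mu> \<and>
      (\<forall>x\<in>space \<mu>. \<forall>y\<in>space \<mu>. x \<noteq> y \<longrightarrow> (\<exists>U\<in>B. x\<in>U \<and> y\<notin>U))"
    using standard_borel_sep[OF assms(1)] ..
  note B = B0[THEN conjunct1] B0[THEN conjunct2, THEN conjunct1] B0[THEN conjunct2, THEN conjunct2]
  have rss: "relational_sample_space \<mu> (\<lambda>x y. x \<noteq> y \<and> (\<exists>j\<in>{1..k}. T j x = y))"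
    unfolding relational_sample_space_def
    using assms(1) definable_sets[OF B] by blast
  show ?thesis using rss assms(2) unfolding modeling_def by blast
qed

end
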